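(* Let $A,B\subset\mathbb{R}^n$ be set-germs at $0$ with $0\in\overline{A}\cap\overline{B}$, and let $h:(\mathbb{R}^n,0)\to(\mathbb{R}^n,0)$ be a bi-Lipschitz homeomorphism germ. Suppose that $A$ or $B$ satisfies condition (SSP), and that $h(A)$ or $h(B)$ satisfies condition (SSP). Then $A$ and $B$ are weakly transverse at $0$ if and only if $h(A)$ and $h(B)$ are weakly transverse at $0$.
   Context: For a set-germ $A\subset\mathbb{R}^n$ at $0$ with $0\in\overline A$, the direction set is $D(A)=\{a\in S^{n-1}:\exists\, x_i\in A\setminus\{0\},\ x_i\to0,\ x_i/\|x_i\|\to a\}$, where $S^{n-1}$ is the unit sphere. For sequences, $\|u_m\|\ll\|v_m\|,\|w_m\|$ means $\|u_m\|/\|v_m\|\to0$ and $\|u_m\|/\|w_m\|\to0$. A set-germ $A$ with $0\in\overline A$ satisfies condition (SSP) if for every sequence $a_m\in\mathbb{R}^n$ tending to $0$ with $\lim a_m/\|a_m\|\in D(A)$ there is a sequence $b_m\in A$ with $\|a_m-b_m\|\ll\|a_m\|,\|b_m\|$. $A$ and $B$ are weakly transverse at $0$ if $D(A)\cap D(B)=\emptyset$. A bi-Lipschitz homeomorphism germ $h$ is a homeomorphism germ with $h(0)=0$ and constants $0<K_1\le K_2$ with $K_1\|x-y\|\le\|h(x)-h(y)\|\le K_2\|x-y\|$ near $0$. *)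

theory Defs
  imports "HOL-Analysis.Analysis"
begin

definition dirset :: "'a::euclidean_space set \<Rightarrow> 'a set" where
  "dirset A = {a \<in> sphere 0 1. \<exists>x :: nat \<Rightarrow> 'a.
      (\<forall>i. x i \<in> A - {0}) \<and> x \<longlonglongrightarrow> 0 \<and> (\<lambda>i. x i /\<^sub>R norm (x i)) \<longlonglongrightarrow> a}"

definition SSP :: "'a::euclidean_space set \<Rightarrow> bool" where
  "SSP A \<longleftrightarrow> (\<forall>a :: nat \<Rightarrow> 'a. \<forall>d.
      a \<longlonglongrightarrow> 0 \<and> (\<lambda>m. a m /\<^sub>R norm (a m)) \<longlonglongrightarrow> d \<and> d \<in> dirset A \<longrightarrow>
      (\<exists>b :: nat \<Rightarrow> 'a. (\<forall>m. b m \<in> A) \<and>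
          (\<lambda>m. norm (a m - b m) / norm (a m)) \<longlonglongrightarrow> 0 \<and>
          (\<lambda>m. norm (a m - b m) / norm (b m)) \<longlonglongrightarrow> 0))"

definition weakly_transverse :: "'a::euclidean_space set \<Rightarrow> 'a set \<Rightarrow> bool" where
  "weakly_transverse A B \<longleftrightarrow> dirset A \<inter> dirset B = {}"

text \<open>h, restricted to the open neighbourhood U of 0, is a representative of a
  bi-Lipschitz homeomorphism germ (R^n,0) -> (R^n,0).\<close>
definition bilipschitz_homeo_germ :: "('a::euclidean_space \<Rightarrow> 'a) \<Rightarrow> 'a set \<Rightarrow> bool" where
  "bilipschitz_homeo_germ h U \<longleftrightarrow>
     open U \<and> 0 \<in> U \<and> h 0 = 0 \<and> open (h ` U) \<and>
     (\<exists>g. homeomorphism U (h ` U) h g) \<and>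
     (\<exists>K1 K2. 0 < K1 \<and> K1 \<le> K2 \<and>
        (\<forall>x\<in>U. \<forall>y\<in>U. K1 * dist x y \<le> dist (h x) (h y) \<and> dist (h x) (h y) \<le> K2 * dist x y))"

end

theory Submission imports Defs begin

lemma unit_diff:
  fixes p q :: "'a::real_normed_vector"
  assumes "p \<noteq> 0" "q \<noteq> 0"
  shows "norm (p /\<^sub>R norm p - q /\<^sub>R norm q) \<le> 2 * norm (p - q) / norm p"
proof -
  have e: "p /\<^sub>R norm p - q /\<^sub>R norm q = (p - q) /\<^sub>R norm p + ((norm q - norm p) / (norm p * norm q)) *\<^sub>R q"
  proof -
    have "(norm q - norm p) / (norm p * norm q) = inverse (norm p) - inverse (norm q)"
      using assms by (simp add: field_simps)
    thus ?thesis by (simp add: scaleR_diff_left scaleR_diff_right)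
  qed
  have "norm (((norm q - norm p) / (norm p * norm q)) *\<^sub>R q) = \<bar>norm q - norm p\<bar> / norm p"
    using assms by (simp add: abs_mult)
  also have "\<dots> \<le> norm (p - q) / norm p"
  proof (rule divide_right_mono)
    show "\<bar>norm q - norm p\<bar> \<le> norm (p - q)" using norm_triangle_ineq3[of q p] by (simp add: norm_minus_commute)
  qed simp
  finally have h2: "norm (((norm q - norm p) / (norm p * norm q)) *\<^sub>R q) \<le> norm (p - q) / norm p" .
  have n1: "norm ((p - q) /\<^sub>R norm p) = norm (p - q) / norm p" by (simp add: divide_inverse_commute)
  have "2 * norm (p - q) / norm p = norm (p - q) / norm p + norm (p - q) / norm p" by simp
  thus ?thesis
    unfolding e using norm_triangle_ineq[of "(p - q) /\<^sub>R norm p" "((norm q - norm p) / (norm p * norm q)) *\<^sub>R q"] h2 n1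
    by linarith
qed

lemma dirset_ev:
  assumes "eventually (\<lambda>i. z i \<in> S - {0}) sequentially" "z \<longlonglongrightarrow> 0"
    "(\<lambda>i. z i /\<^sub>R norm (z i)) \<longlonglongrightarrow> a" "a \<in> sphere 0 1"
  shows "a \<in> dirset S"
proof -
  obtain N where N: "\<And>i. i \<ge> N \<Longrightarrow> z i \<in> S - {0}" using assms(1) unfolding eventually_sequentially by blast
  have "(\<lambda>i. z (i + N)) \<longlonglongrightarrow> 0" using LIMSEQ_ignore_initial_segment[OF assms(2)] .
  moreover have "(\<lambda>i. z (i + N) /\<^sub>R norm (z (i + N))) \<longlonglongrightarrow> a"
    using LIMSEQ_ignore_initial_segment[OF assms(3), of N] .
  moreover have "\<forall>i. z (i + N) \<in> S - {0}" using N by simp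
  ultimately show ?thesis using assms(4) unfolding dirset_def mem_Collect_eq
    by (intro conjI exI[of _ "\<lambda>i. z (i + N)"]) auto
qed

lemma core:
  fixes A B V :: "'a::euclidean_space set" and f :: "'a \<Rightarrow> 'a"
  assumes ssp: "SSP A" and dA: "d \<in> dirset A" and dB: "d \<in> dirset B"
    and V: "open V" "0 \<in> V" and f0: "f 0 = 0" and K1: "K1 > 0"
    and lip: "\<And>x y. x \<in> V \<Longrightarrow> y \<in> V \<Longrightarrow> K1 * dist x y \<le> dist (f x) (f y) \<and> dist (f x) (f y) \<le> K2 * dist x y"
  shows "dirset (f ` (A \<inter> V)) \<inter> dirset (f ` (B \<inter> V)) \<noteq> {}"
proof -
  from dB obtain x where x: "\<forall>i. x i \<in> B - {0}" "x \<longlonglongrightarrow> 0" "(\<lambda>i. x i /\<^sub>R norm (x i)) \<longlonglongrightarrow> d"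
    unfolding dirset_def by blast
  from ssp dA x obtain b where b: "\<forall>m. b m \<in> A" "(\<lambda>m. norm (x m - b m) / norm (x m)) \<longlonglongrightarrow> 0"
    "(\<lambda>m. norm (x m - b m) / norm (b m)) \<longlonglongrightarrow> 0"
    unfolding SSP_def by blast
  define \<rho> where "\<rho> m = norm (x m - b m) / norm (x m)" for m
  have x0: "x m \<noteq> 0" for m using x(1) by blast
  have nb: "norm (x m - b m) = \<rho> m * norm (x m)" for m using x0[of m] by (simp add: \<rho>_def)
  have "b \<longlonglongrightarrow> 0"
  proof (rule Lim_null_comparison)
    show "\<forall>\<^sub>F m in sequentially. norm (b m) \<le> norm (x m) + \<rho> m * norm (x m)"
    proof (intro always_eventually allI)
      fix m
      have "norm (b m) \<le> norm (x m) + norm (x m - b m)"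
        using norm_triangle_sub[of "b m" "x m"] by (simp add: norm_minus_commute)
      thus "norm (b m) \<le> norm (x m) + \<rho> m * norm (x m)" by (simp add: nb)
    qed
    have "(\<lambda>m. norm (x m)) \<longlonglongrightarrow> 0" using tendsto_norm_zero[OF x(2)] .
    moreover have "\<rho> \<longlonglongrightarrow> 0" using b(2) unfolding \<rho>_def[abs_def] .
    ultimately show "(\<lambda>m. norm (x m) + \<rho> m * norm (x m)) \<longlonglongrightarrow> 0"
      using tendsto_add[of _ 0 _ _ 0] tendsto_mult[of \<rho> 0 _ _ 0] by force
  qed
  have rho: "\<rho> \<longlonglongrightarrow> 0" using b(2) unfolding \<rho>_def[abs_def] .
  have ev1: "eventually (\<lambda>m. x m \<in> V) sequentially" by (rule topological_tendstoD[OF x(2) V])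
  have ev2: "eventually (\<lambda>m. b m \<in> V) sequentially" by (rule topological_tendstoD[OF \<open>b \<longlonglongrightarrow> 0\<close> V])
  have ev3: "eventually (\<lambda>m. \<rho> m < 1) sequentially" using order_tendstoD(2)[OF rho] by simp
  have ev4: "eventually (\<lambda>m. b m \<noteq> 0) sequentially"
    using ev3 by eventually_elim (use x0 in \<open>auto simp: \<rho>_def\<close>)
  obtain N where N: "\<And>m. m \<ge> N \<Longrightarrow> x m \<in> V \<and> b m \<in> V \<and> b m \<noteq> 0"
    using eventually_conj[OF ev1 eventually_conj[OF ev2 ev4]] unfolding eventually_sequentially by blast
  have fnz: "f z \<noteq> 0" "norm (f z) \<ge> K1 * norm z" if "z \<in> V" "z \<noteq> 0" for z
  proof -
    have "K1 * dist z 0 \<le> dist (f z) (f 0)" using lip[OF that(1) V(2)] by blast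
    thus "norm (f z) \<ge> K1 * norm z" by (simp add: f0)
    moreover have "K1 * norm z > 0" using K1 that(2) by simp
    ultimately show "f z \<noteq> 0" by auto
  qed
  have fub: "norm (f z) \<le> K2 * norm z" if "z \<in> V" for z
    using lip[OF that V(2)] by (simp add: f0)
  define u where "u m = f (x m) /\<^sub>R norm (f (x m))" for m
  have "u m \<in> cball 0 1" for m
    by (cases "f (x m) = 0") (auto simp: u_def)
  then obtain e r where e: "e \<in> cball 0 1" "strict_mono r" "(u \<circ> r) \<longlonglongrightarrow> e"
    using seq_compactE[OF compact_imp_seq_compact[OF compact_cball]] by metis
  have rN: "m \<ge> N \<Longrightarrow> r m \<ge> N" for m using seq_suble[OF e(2), of m] by simp
  have evr: "eventually (\<lambda>m. x (r m) \<in> V \<and> b (r m) \<in> V \<and> b (r m) \<noteq> 0) sequentially"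
    unfolding eventually_sequentially using N rN by blast
  have "(\<lambda>m. norm (u (r m))) \<longlonglongrightarrow> norm e" using tendsto_norm[OF e(3)] by (simp add: comp_def)
  moreover have "eventually (\<lambda>m. norm (u (r m)) = 1) sequentially"
    using evr by eventually_elim (use fnz x0 in \<open>auto simp: u_def\<close>)
  ultimately have "(\<lambda>m. 1) \<longlonglongrightarrow> norm e" by (rule Lim_transform_eventually)
  hence "norm e = 1" using LIMSEQ_unique tendsto_const by blast
  hence eS: "e \<in> sphere 0 1" by simp
  have xr: "(\<lambda>m. x (r m)) \<longlonglongrightarrow> 0" using LIMSEQ_subseq_LIMSEQ[OF x(2) e(2)] by (simp add: comp_def)
  have br: "(\<lambda>m. b (r m)) \<longlonglongrightarrow> 0" using LIMSEQ_subseq_LIMSEQ[OF \<open>b \<longlonglongrightarrow> 0\<close> e(2)] by (simp add: comp_def)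
  have rhor: "(\<lambda>m. \<rho> (r m)) \<longlonglongrightarrow> 0" using LIMSEQ_subseq_LIMSEQ[OF rho e(2)] by (simp add: comp_def)
  have fxr: "(\<lambda>m. f (x (r m))) \<longlonglongrightarrow> 0"
  proof (rule Lim_null_comparison)
    show "\<forall>\<^sub>F m in sequentially. norm (f (x (r m))) \<le> K2 * norm (x (r m))"
      using evr by eventually_elim (use fub in auto)
    show "(\<lambda>m. K2 * norm (x (r m))) \<longlonglongrightarrow> 0" using tendsto_mult_right_zero[OF tendsto_norm_zero[OF xr]] .
  qed
  have fbr: "(\<lambda>m. f (b (r m))) \<longlonglongrightarrow> 0"
  proof (rule Lim_null_comparison)
    show "\<forall>\<^sub>F m in sequentially. norm (f (b (r m))) \<le> K2 * norm (b (r m))"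
      using evr by eventually_elim (use fub in auto)
    show "(\<lambda>m. K2 * norm (b (r m))) \<longlonglongrightarrow> 0" using tendsto_mult_right_zero[OF tendsto_norm_zero[OF br]] .
  qed
  have ur: "(\<lambda>m. u (r m)) \<longlonglongrightarrow> e" using e(3) by (simp add: comp_def)
  have vr: "(\<lambda>m. f (b (r m)) /\<^sub>R norm (f (b (r m)))) \<longlonglongrightarrow> e"
  proof (rule Lim_transform[OF ur])
    show "(\<lambda>m. f (b (r m)) /\<^sub>R norm (f (b (r m))) - u (r m)) \<longlonglongrightarrow> 0"
    proof (rule Lim_null_comparison)
      show "(\<lambda>m. (2 * K2 / K1) * \<rho> (r m)) \<longlonglongrightarrow> 0" using tendsto_mult_right_zero[OF rhor] .
      show "\<forall>\<^sub>F m in sequentially. norm (f (b (r m)) /\<^sub>R norm (f (b (r m))) - u (r m)) \<le> (2 * K2 / K1) * \<rho> (r m)"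
        using evr
      proof eventually_elim
        case (elim m)
        define p where "p = f (x (r m))"
        define q where "q = f (b (r m))"
        have xV: "x (r m) \<in> V" and bV: "b (r m) \<in> V" and bz: "b (r m) \<noteq> 0" using elim by auto
        have p0: "p \<noteq> 0" and pge: "norm p \<ge> K1 * norm (x (r m))" using fnz[OF xV x0] by (auto simp: p_def)
        have q0: "q \<noteq> 0" using fnz[OF bV bz] by (auto simp: q_def)
        have pq: "norm (p - q) \<le> K2 * norm (x (r m) - b (r m))"
          using lip[OF xV bV] by (simp add: p_def q_def dist_norm)
        have "norm (q /\<^sub>R norm q - u (r m)) = norm (p /\<^sub>R norm p - q /\<^sub>R norm q)"
          by (simp add: u_def p_def norm_minus_commute)
        also have "\<dots> \<le> 2 * norm (p - q) / norm p" by (rule unit_diff[OF p0 q0])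
        also have "\<dots> \<le> 2 * (K2 * norm (x (r m) - b (r m))) / (K1 * norm (x (r m)))"
          proof (rule frac_le)
          show "0 \<le> 2 * (K2 * norm (x (r m) - b (r m)))" using pq norm_ge_zero[of "p - q"] by linarith
        qed (use pq pge K1 x0[of "r m"] in auto)
        also have "\<dots> = (2 * K2 / K1) * \<rho> (r m)"
          using K1 x0[of "r m"] by (simp add: \<rho>_def)
        finally show ?case by (simp add: q_def)
      qed
    qed
  qed
  have "e \<in> dirset (f ` (B \<inter> V))"
  proof (rule dirset_ev[OF _ fxr _ eS])
    show "\<forall>\<^sub>F i in sequentially. f (x (r i)) \<in> f ` (B \<inter> V) - {0}"
      using evr by eventually_elim (use x(1) fnz in blast)
    show "(\<lambda>i. f (x (r i)) /\<^sub>R norm (f (x (r i)))) \<longlonglongrightarrow> e" using ur by (simp add: u_def)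
  qed
  moreover have "e \<in> dirset (f ` (A \<inter> V))"
  proof (rule dirset_ev[OF _ fbr vr eS])
    show "\<forall>\<^sub>F i in sequentially. f (b (r i)) \<in> f ` (A \<inter> V) - {0}"
      using evr by eventually_elim (use b(1) fnz in blast)
  qed
  ultimately show ?thesis by blast
qed


lemma dirset_mono: "A \<subseteq> B \<Longrightarrow> dirset A \<subseteq> dirset B"
  unfolding dirset_def by blast

lemma core2:
  fixes A B V :: "'a::euclidean_space set" and f :: "'a \<Rightarrow> 'a"
  assumes ssp: "SSP A \<or> SSP B" and ne: "dirset A \<inter> dirset B \<noteq> {}"
    and V: "open V" "0 \<in> V" and f0: "f 0 = 0" and K1: "K1 > 0"
    and lip: "\<And>x y. x \<in> V \<Longrightarrow> y \<in> V \<Longrightarrow> K1 * dist x y \<le> dist (f x) (f y) \<and> dist (f x) (f y) \<le> K2 * dist x y"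
  shows "dirset (f ` (A \<inter> V)) \<inter> dirset (f ` (B \<inter> V)) \<noteq> {}"
proof -
  obtain d where d: "d \<in> dirset A" "d \<in> dirset B" using ne by blast
  show ?thesis
  proof (cases "SSP A")
    case True
    show ?thesis by (rule core[OF True d V f0 K1 lip])
  next
    case False
    hence "SSP B" using ssp by blast
    from core[OF this d(2) d(1) V f0 K1 lip] show ?thesis by blast
  qed
qed

theorem theorem3p5:
  fixes A B U :: "'a::euclidean_space set" and h :: "'a \<Rightarrow> 'a"
  assumes "0 \<in> closure A" and "0 \<in> closure B"
    and "bilipschitz_homeo_germ h U"
    and "SSP A \<or> SSP B"
    and "SSP (h ` (A \<inter> U)) \<or> SSP (h ` (B \<inter> U))"
  shows "weakly_transverse A B \<longleftrightarrow> weakly_transverse (h ` (A \<inter> U)) (h ` (B \<inter> U))"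
proof -
  from assms(3) obtain g K1 K2 where U: "open U" "0 \<in> U" and h0: "h 0 = 0" and hU: "open (h ` U)"
    and hom: "homeomorphism U (h ` U) h g" and K: "0 < K1" "K1 \<le> K2"
    and lip: "\<And>x y. x\<in>U \<Longrightarrow> y\<in>U \<Longrightarrow> K1 * dist x y \<le> dist (h x) (h y) \<and> dist (h x) (h y) \<le> K2 * dist x y"
    unfolding bilipschitz_homeo_germ_def by blast
  have gh: "\<And>x. x \<in> U \<Longrightarrow> g (h x) = x" using hom unfolding homeomorphism_def by blast
  have g0: "g 0 = 0" using gh[OF U(2)] h0 by simp
  have h0U: "0 \<in> h ` U" using U(2) h0 by force
  have K2: "0 < K2" using K by linarith
  have glip: "(1/K2) * dist x y \<le> dist (g x) (g y) \<and> dist (g x) (g y) \<le> (1/K1) * dist x y"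
    if xyU: "x \<in> h ` U" "y \<in> h ` U" for x y
  proof -
    obtain x0 y0 where xy: "x0 \<in> U" "y0 \<in> U" "x = h x0" "y = h y0" using xyU by blast
    have l: "K1 * dist x0 y0 \<le> dist x y" "dist x y \<le> K2 * dist x0 y0" using lip[OF xy(1,2)] xy by auto
    have "(1/K2) * dist x y \<le> dist x0 y0" using l(2) K2 by (simp add: field_simps)
    moreover have "dist x0 y0 \<le> (1/K1) * dist x y" using l(1) K by (simp add: field_simps)
    ultimately show ?thesis using xy gh by simp
  qed
  have gimg: "g ` (h ` (S \<inter> U) \<inter> h ` U) = S \<inter> U" for S
    using gh by force
  show ?thesis
  proof
    assume wt: "weakly_transverse A B"
    show "weakly_transverse (h ` (A \<inter> U)) (h ` (B \<inter> U))"
    proof (rule ccontr)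
      assume "\<not> ?thesis"
      hence ne: "dirset (h ` (A \<inter> U)) \<inter> dirset (h ` (B \<inter> U)) \<noteq> {}" unfolding weakly_transverse_def .
      have "dirset (g ` (h ` (A \<inter> U) \<inter> h ` U)) \<inter> dirset (g ` (h ` (B \<inter> U) \<inter> h ` U)) \<noteq> {}"
        by (rule core2[OF assms(5) ne hU h0U g0 _ glip]) (use K2 in simp)
      hence "dirset (A \<inter> U) \<inter> dirset (B \<inter> U) \<noteq> {}" unfolding gimg .
      moreover have "dirset (A \<inter> U) \<subseteq> dirset A" "dirset (B \<inter> U) \<subseteq> dirset B" by (rule dirset_mono, blast)+
      ultimately show False using wt unfolding weakly_transverse_def by blast
    qed
  next
    assume wt: "weakly_transverse (h ` (A \<inter> U)) (h ` (B \<inter> U))"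
    show "weakly_transverse A B"
    proof (rule ccontr)
      assume "\<not> ?thesis"
      hence ne: "dirset A \<inter> dirset B \<noteq> {}" unfolding weakly_transverse_def .
      have "dirset (h ` (A \<inter> U)) \<inter> dirset (h ` (B \<inter> U)) \<noteq> {}"
        by (rule core2[OF assms(4) ne U h0 K(1) lip])
      thus False using wt unfolding weakly_transverse_def by blast
    qed
  qed
qed

end
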